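(* $\mathrm{NID}\notin\Pi_1$; that is, there is no computable function $f:\{0,1\}^*\times\{0,1\}^*\times\omega\to\mathbb{Q}$ which is nonincreasing in $s$ and satisfies $\lim_{s\to\infty}f(x,y,s)=\mathrm{NID}(x,y)$ for all $x,y$.
   Context: Fix a universal prefix-free machine $U$. $K(x)$ denotes prefix-free Kolmogorov complexity and $K(x\mid y)$ conditional prefix-free complexity. For binary strings $x,y$ let $E(x,y)=\max\{K(x\mid y),K(y\mid x)\}$ and $\mathrm{NID}(x,y)=\dfrac{E(x,y)}{\max\{K(x),K(y)\}}$ (a rational number). A function $F$ (on pairs of strings, rational-valued) is in $\Pi_1$ if it has a computable approximation $f$ with $\lim_s f(\cdot,s)=F$ that is nonincreasing in $s$. *)

theory Defs
  imports Complex_Main "HOL-Library.Nat_Bijection"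
begin

datatype recf = Zero | Succ | Proj nat | Comp recf "recf list" | Prim recf recf | Mn recf

inductive eval :: "recf \<Rightarrow> nat list \<Rightarrow> nat \<Rightarrow> bool" where
  ev_zero: "eval Zero xs 0"
| ev_succ: "eval Succ (x # xs) (Suc x)"
| ev_proj: "i < length xs \<Longrightarrow> eval (Proj i) xs (xs ! i)"
| ev_comp: "list_all2 (\<lambda>g y. eval g xs y) gs ys \<Longrightarrow> eval f ys z \<Longrightarrow> eval (Comp f gs) xs z"
| ev_prim0: "eval f xs y \<Longrightarrow> eval (Prim f g) (0 # xs) y"
| ev_primS: "eval (Prim f g) (n # xs) y \<Longrightarrow> eval g (y # n # xs) z \<Longrightarrow> eval (Prim f g) (Suc n # xs) z"
| ev_mn: "eval f (n # xs) 0 \<Longrightarrow> (\<forall>m<n. \<exists>k. eval f (m # xs) (Suc k)) \<Longrightarrow> eval (Mn f) xs n"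

type_synonym bstr = "bool list"

fun scode :: "bstr \<Rightarrow> nat" where
  "scode [] = 0"
| "scode (False # xs) = 2 * scode xs + 1"
| "scode (True # xs) = 2 * scode xs + 2"

definition rcode :: "rat \<Rightarrow> nat" where
  "rcode q = (case quotient_of q of (a, b) \<Rightarrow> prod_encode (int_encode a, int_encode b))"

text \<open>A conditional machine: program p, condition y, output.\<close>
type_synonym machine = "bstr \<Rightarrow> bstr \<Rightarrow> bstr option"

definition partial_computable_machine :: "machine \<Rightarrow> bool" where
  "partial_computable_machine M \<longleftrightarrow>
     (\<exists>r. \<forall>p y z. eval r [scode p, scode y] z \<longleftrightarrow> (\<exists>x. M p y = Some x \<and> z = scode x))"

definition prefix_free_machine :: "machine \<Rightarrow> bool" where
  "prefix_free_machine M \<longleftrightarrow>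
     (\<forall>y p q. M p y \<noteq> None \<longrightarrow> M (p @ q) y \<noteq> None \<longrightarrow> q = [])"

definition universal_pf_machine :: "machine \<Rightarrow> bool" where
  "universal_pf_machine U \<longleftrightarrow>
     partial_computable_machine U \<and> prefix_free_machine U \<and>
     (\<forall>M. partial_computable_machine M \<and> prefix_free_machine M \<longrightarrow>
        (\<exists>\<sigma>. \<forall>p y. U (\<sigma> @ p) y = M p y))"

definition Kc :: "machine \<Rightarrow> bstr \<Rightarrow> bstr \<Rightarrow> nat" where
  "Kc U x y = (LEAST n. \<exists>p. length p = n \<and> U p y = Some x)"

definition K :: "machine \<Rightarrow> bstr \<Rightarrow> nat" where
  "K U x = Kc U x []"

definition E :: "machine \<Rightarrow> bstr \<Rightarrow> bstr \<Rightarrow> nat" where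
  "E U x y = max (Kc U x y) (Kc U y x)"

definition NID :: "machine \<Rightarrow> bstr \<Rightarrow> bstr \<Rightarrow> rat" where
  "NID U x y = of_nat (E U x y) / of_nat (max (K U x) (K U y))"

definition computable_rat3 :: "(bstr \<Rightarrow> bstr \<Rightarrow> nat \<Rightarrow> rat) \<Rightarrow> bool" where
  "computable_rat3 f \<longleftrightarrow>
     (\<exists>r. \<forall>x y s z. eval r [scode x, scode y, s] z \<longleftrightarrow> z = rcode (f x y s))"

definition in_Pi1 :: "(bstr \<Rightarrow> bstr \<Rightarrow> rat) \<Rightarrow> bool" where
  "in_Pi1 F \<longleftrightarrow>
     (\<exists>f. computable_rat3 f \<and>
        (\<forall>x y s. f x y (Suc s) \<le> f x y s) \<and>
        (\<forall>x y. (\<lambda>s. real_of_rat (f x y s)) \<longlonglongrightarrow> real_of_rat (F x y)))"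

end

theory Submission
  imports Defs
begin


inductive_cases evZ: "eval Zero xs z"
inductive_cases evS: "eval Succ xs z"
inductive_cases evP: "eval (Proj i) xs z"
inductive_cases evC: "eval (Comp f gs) xs z"
inductive_cases evPr: "eval (Prim f g) xs z"
inductive_cases evM: "eval (Mn f) xs z"

definition tot :: "recf \<Rightarrow> nat \<Rightarrow> (nat list \<Rightarrow> nat) \<Rightarrow> bool" where
  "tot r k F \<longleftrightarrow> (\<forall>xs z. length xs = k \<longrightarrow> (eval r xs z \<longleftrightarrow> z = F xs))"

lemma tot_cong: "tot r k F \<Longrightarrow> (\<And>xs. length xs = k \<Longrightarrow> F xs = G xs) \<Longrightarrow> tot r k G"
  unfolding tot_def by auto

lemma tot_zero: "tot Zero k (\<lambda>_. 0)"
  unfolding tot_def by (auto intro: eval.intros elim: evZ)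

lemma tot_succ: "tot Succ 1 (\<lambda>xs. Suc (xs!0))"
  unfolding tot_def by (auto intro: eval.intros elim: evS simp: length_Suc_conv)

lemma tot_proj: "i < k \<Longrightarrow> tot (Proj i) k (\<lambda>xs. xs!i)"
  unfolding tot_def by (auto intro: eval.intros elim: evP)

lemma la2_tot: "list_all2 (\<lambda>g G. tot g k G) gs Gs \<Longrightarrow> length xs = k \<Longrightarrow>
   list_all2 (\<lambda>g y. eval g xs y) gs ys \<longleftrightarrow> ys = map (\<lambda>G. G xs) Gs"
proof (induction gs arbitrary: Gs ys)
  case Nil thus ?case by auto
next
  case (Cons g gs)
  then obtain G Gs' where Gs: "Gs = G # Gs'" "tot g k G" "list_all2 (\<lambda>g G. tot g k G) gs Gs'"
    by (auto simp: list_all2_Cons1)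
  show ?case using Cons.IH[OF Gs(3) Cons.prems(2)] Gs(2) Cons.prems(2)
    by (cases ys) (auto simp: Gs(1) tot_def)
qed

lemma tot_comp: "tot f (length gs) F \<Longrightarrow> list_all2 (\<lambda>g G. tot g k G) gs Gs \<Longrightarrow>
   tot (Comp f gs) k (\<lambda>xs. F (map (\<lambda>G. G xs) Gs))"
  unfolding tot_def[of "Comp f gs"]
proof (intro allI impI)
  fix xs :: "nat list" and z assume a: "tot f (length gs) F" "list_all2 (\<lambda>g G. tot g k G) gs Gs" "length xs = k"
  have l: "length (map (\<lambda>G. G xs) Gs) = length gs" using a(2) by (simp add: list_all2_lengthD)
  show "eval (Comp f gs) xs z = (z = F (map (\<lambda>G. G xs) Gs))"
  proof
    assume "eval (Comp f gs) xs z"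
    then show "z = F (map (\<lambda>G. G xs) Gs)"
      apply (rule evC) using la2_tot[OF a(2) a(3)] a(1) l unfolding tot_def by auto
  next
    assume "z = F (map (\<lambda>G. G xs) Gs)"
    then show "eval (Comp f gs) xs z"
      using la2_tot[OF a(2) a(3)] a(1) l unfolding tot_def by (auto intro: ev_comp)
  qed
qed

lemma comp1: "tot f 1 F \<Longrightarrow> tot g k G \<Longrightarrow> tot (Comp f [g]) k (\<lambda>xs. F [G xs])"
  using tot_comp[of f "[g]" F k "[G]"] by simp
lemma comp2: "tot f 2 F \<Longrightarrow> tot g k G \<Longrightarrow> tot h k H \<Longrightarrow> tot (Comp f [g,h]) k (\<lambda>xs. F [G xs, H xs])"
  using tot_comp[of f "[g,h]" F k "[G,H]"] by (simp add: numeral_2_eq_2)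
lemma comp3: "tot f 3 F \<Longrightarrow> tot g k G \<Longrightarrow> tot h k H \<Longrightarrow> tot i k I \<Longrightarrow>
   tot (Comp f [g,h,i]) k (\<lambda>xs. F [G xs, H xs, I xs])"
  using tot_comp[of f "[g,h,i]" F k "[G,H,I]"] by (simp add: numeral_3_eq_3)

lemma tot_prim: "tot f k F \<Longrightarrow> tot g k2 G \<Longrightarrow> k2 = Suc (Suc k) \<Longrightarrow>
  (\<And>xs. length xs = k \<Longrightarrow> H (0 # xs) = F xs) \<Longrightarrow>
  (\<And>n xs. length xs = k \<Longrightarrow> H (Suc n # xs) = G (H (n # xs) # n # xs)) \<Longrightarrow>
  tot (Prim f g) (Suc k) H"
  unfolding tot_def[of "Prim f g"]
proof (intro allI impI)
  fix xs :: "nat list" and z assume a: "tot f k F" "tot g k2 G" "k2 = Suc (Suc k)"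
    "\<And>xs. length xs = k \<Longrightarrow> H (0 # xs) = F xs"
    "\<And>n xs. length xs = k \<Longrightarrow> H (Suc n # xs) = G (H (n # xs) # n # xs)"
    and l: "length xs = Suc k"
  then obtain n :: nat and ys where xs: "xs = n # ys" and ly: "length ys = k" by (cases xs) auto
  have "\<forall>z. eval (Prim f g) (n # ys) z \<longleftrightarrow> z = H (n # ys)"
  proof (induction n)
    case 0 show ?case using a(1) a(4)[OF ly] ly unfolding tot_def
      by (auto elim: evPr intro: eval.intros)
  next
    case (Suc n)
    show ?case
    proof (intro allI iffI)
      fix z assume "eval (Prim f g) (Suc n # ys) z"
      then show "z = H (Suc n # ys)"
        apply (rule evPr) using Suc a(2,3) a(5)[OF ly] ly unfolding tot_def by auto
    next
      fix z assume "z = H (Suc n # ys)"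
      then show "eval (Prim f g) (Suc n # ys) z"
        using Suc a(2,3) a(5)[OF ly] ly unfolding tot_def by (auto intro: ev_primS)
    qed
  qed
  then show "eval (Prim f g) xs z = (z = H xs)" by (simp add: xs)
qed

lemma tot_prim': "tot f k F \<Longrightarrow> tot g k2 G \<Longrightarrow> k2 = Suc (Suc k) \<Longrightarrow> k1 = Suc k \<Longrightarrow>
  (\<And>xs. length xs = k \<Longrightarrow> H (0 # xs) = F xs) \<Longrightarrow>
  (\<And>n xs. length xs = k \<Longrightarrow> H (Suc n # xs) = G (H (n # xs) # n # xs)) \<Longrightarrow>
  tot (Prim f g) k1 H"
  using tot_prim by blast

lemma tot_mn: assumes t: "tot f (Suc k) F" and l: "length xs = k"
  shows "eval (Mn f) xs n \<longleftrightarrow> F (n # xs) = 0 \<and> (\<forall>m<n. F (m # xs) \<noteq> 0)"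
proof -
  have e: "\<And>m z. eval f (m # xs) z \<longleftrightarrow> z = F (m # xs)"
    using t l unfolding tot_def by simp
  show ?thesis
  proof
    assume "eval (Mn f) xs n"
    then have h: "eval f (n # xs) 0" "\<forall>m<n. \<exists>k. eval f (m # xs) (Suc k)"
      by (blast elim: evM)+
    show "F (n # xs) = 0 \<and> (\<forall>m<n. F (m # xs) \<noteq> 0)"
    proof
      show "F (n # xs) = 0" using h(1) e by simp
      show "\<forall>m<n. F (m # xs) \<noteq> 0"
      proof (intro allI impI)
        fix m assume "m < n"
        then obtain k where "eval f (m # xs) (Suc k)" using h(2) by blast
        then show "F (m # xs) \<noteq> 0" using e by simp
      qed
    qed
  next
    assume a: "F (n # xs) = 0 \<and> (\<forall>m<n. F (m # xs) \<noteq> 0)"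
    have "\<forall>m<n. \<exists>k. eval f (m # xs) (Suc k)"
    proof (intro allI impI)
      fix m assume "m < n"
      then have "F (m # xs) \<noteq> 0" using a by blast
      then show "\<exists>k. eval f (m # xs) (Suc k)" by (intro exI[of _ "F (m # xs) - 1"]) (simp add: e)
    qed
    moreover have "eval f (n # xs) 0" using a e by simp
    ultimately show "eval (Mn f) xs n" by (rule ev_mn[rotated])
  qed
qed



lemma p0_1: "tot (Proj 0) 1 (\<lambda>xs. xs!0)" by (rule tot_proj) simp
lemma p0_2: "tot (Proj 0) 2 (\<lambda>xs. xs!0)" by (rule tot_proj) simp
lemma p1_2: "tot (Proj 1) 2 (\<lambda>xs. xs!1)" by (rule tot_proj) simp
lemma p0_3: "tot (Proj 0) 3 (\<lambda>xs. xs!0)" by (rule tot_proj) simp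
lemma p1_3: "tot (Proj 1) 3 (\<lambda>xs. xs!1)" by (rule tot_proj) simp
lemma p2_3: "tot (Proj 2) 3 (\<lambda>xs. xs!2)" by (rule tot_proj) simp

definition "r_add = Prim (Proj 0) (Comp Succ [Proj 0])"
lemma tot_add: "tot r_add 2 (\<lambda>xs. xs!0 + xs!1)"
  unfolding r_add_def
  by (rule tot_prim'[OF p0_1 comp1[OF tot_succ p0_3]]) auto

definition "r_mul = Prim Zero (Comp r_add [Proj 0, Proj 2])"
lemma tot_mul: "tot r_mul 2 (\<lambda>xs. xs!0 * xs!1)"
  unfolding r_mul_def
  by (rule tot_prim'[OF tot_zero comp2[OF tot_add p0_3 p2_3]]) auto

definition "r_pred = Prim Zero (Proj 1)"
lemma tot_pred: "tot r_pred 1 (\<lambda>xs. xs!0 - 1)"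
  unfolding r_pred_def
  by (rule tot_prim'[OF tot_zero p1_2]) auto

definition "r_sub = Prim (Proj 0) (Comp r_pred [Proj 0])"
lemma tot_sub: "tot r_sub 2 (\<lambda>xs. xs!1 - xs!0)"
  unfolding r_sub_def
  by (rule tot_prim'[OF p0_1 comp1[OF tot_pred p0_3]]) auto

definition "r_tri = Prim Zero (Comp r_add [Proj 0, Comp Succ [Proj 1]])"
lemma tot_tri: "tot r_tri 1 (\<lambda>xs. triangle (xs!0))"
  unfolding r_tri_def
  by (rule tot_prim'[OF tot_zero comp2[OF tot_add p0_2 comp1[OF tot_succ p1_2]]]) auto

definition "r_one = Comp Succ [Zero]"
lemma tot_one: "tot r_one k (\<lambda>xs. 1)"
  unfolding r_one_def using comp1[OF tot_succ tot_zero] by simp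

fun dg :: "nat \<Rightarrow> nat" where
  "dg 0 = 0"
| "dg (Suc w) = (if triangle (Suc (dg w)) \<le> Suc w then Suc (dg w) else dg w)"

definition "r_dg = Prim Zero (Comp r_add [Proj 0, Comp r_sub [Comp r_sub [Comp Succ [Proj 1],
   Comp r_tri [Comp Succ [Proj 0]]], r_one]])"
lemma tot_dg: "tot r_dg 1 (\<lambda>xs. dg (xs!0))"
  unfolding r_dg_def
  by (rule tot_prim'[OF tot_zero comp2[OF tot_add p0_2 comp2[OF tot_sub comp2[OF tot_sub
     comp1[OF tot_succ p1_2] comp1[OF tot_tri comp1[OF tot_succ p0_2]]] tot_one]]]) auto

definition "ufst w = w - triangle (dg w)"
definition "usnd w = dg w - ufst w"

definition "r_fst = Comp r_sub [Comp r_tri [r_dg], Proj 0]"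
lemma tot_fst: "tot r_fst 1 (\<lambda>xs. ufst (xs!0))"
  unfolding r_fst_def ufst_def
  by (rule tot_cong[OF comp2[OF tot_sub comp1[OF tot_tri tot_dg] p0_1]]) auto

definition "r_snd = Comp r_sub [r_fst, r_dg]"
lemma tot_snd: "tot r_snd 1 (\<lambda>xs. usnd (xs!0))"
  unfolding r_snd_def usnd_def
  by (rule tot_cong[OF comp2[OF tot_sub tot_fst tot_dg]]) auto

fun cc :: "nat \<Rightarrow> nat" where
  "cc 0 = 1"
| "cc (Suc m) = Suc (Suc (cc m + cc m))"

definition "r_cc = Prim r_one (Comp r_add [Proj 0, Comp Succ [Comp Succ [Proj 0]]])"
lemma tot_cc: "tot r_cc 1 (\<lambda>xs. cc (xs!0))"
  unfolding r_cc_def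
  by (rule tot_prim'[OF tot_one comp2[OF tot_add p0_2 comp1[OF tot_succ comp1[OF tot_succ p0_2]]]]) auto

lemma dg_inv: "triangle (dg w) \<le> w \<and> w < triangle (Suc (dg w))"
  by (induction w) auto

lemma triangle_mono: "a \<le> b \<Longrightarrow> triangle a \<le> triangle b"
  by (induction b) (auto simp: le_Suc_eq)

lemma dg_unique: assumes "triangle d \<le> w" "w < triangle (Suc d)" shows "dg w = d"
proof -
  have i: "triangle (dg w) \<le> w" "w < triangle (Suc (dg w))" using dg_inv by auto
  show ?thesis
  proof (rule ccontr)
    assume "dg w \<noteq> d"
    then consider "Suc (dg w) \<le> d" | "Suc d \<le> dg w" by linarith
    then show False
      using triangle_mono i assms by (cases; fastforce)
  qed
qed

lemma unpair_encode: "ufst (prod_encode (a, b)) = a" "usnd (prod_encode (a, b)) = b"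
proof -
  have "dg (prod_encode (a,b)) = a + b"
    by (rule dg_unique) (auto simp: prod_encode_def)
  then show "ufst (prod_encode (a, b)) = a" "usnd (prod_encode (a, b)) = b"
    by (auto simp: ufst_def usnd_def prod_encode_def)
qed

lemma cc_mono: "cc m < cc (Suc m)" by simp
lemma cc_inj: "cc m = cc n \<Longrightarrow> m = n"
  using strict_mono_eq[of cc] by (metis cc_mono strict_mono_Suc_iff)



definition "r_neq A B = Comp r_add [Comp r_sub [A,B], Comp r_sub [B,A]]"
lemma tot_neq: assumes "tot A k FA" "tot B k FB" shows
  "tot (r_neq A B) k (\<lambda>xs. (FB xs - FA xs) + (FA xs - FB xs))"
  unfolding r_neq_def by (rule tot_cong[OF comp2[OF tot_add comp2[OF tot_sub assms] comp2[OF tot_sub assms(2,1)]]]) simp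

definition "wm w = ufst w"
definition "wn w = ufst (usnd w)"
definition "ws w = ufst (usnd (usnd w))"
definition "wa w = ufst (usnd (usnd (usnd w)))"
definition "wb w = usnd (usnd (usnd (usnd w)))"
definition "wup w = triangle (wa w + wa w + wb w + wb w) + (wa w + wa w)"

definition "rw_m = Comp r_fst [Proj 0]"
definition "rw_v1 = Comp r_snd [Proj 0]"
definition "rw_n = Comp r_fst [rw_v1]"
definition "rw_v2 = Comp r_snd [rw_v1]"
definition "rw_s = Comp r_fst [rw_v2]"
definition "rw_v3 = Comp r_snd [rw_v2]"
definition "rw_a = Comp r_fst [rw_v3]"
definition "rw_b = Comp r_snd [rw_v3]"

lemma tw_m: "tot rw_m 3 (\<lambda>xs. wm (xs!0))"
  unfolding rw_m_def wm_def by (rule tot_cong[OF comp1[OF tot_fst p0_3]]) auto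
lemma tw_v1: "tot rw_v1 3 (\<lambda>xs. usnd (xs!0))"
  unfolding rw_v1_def by (rule tot_cong[OF comp1[OF tot_snd p0_3]]) auto
lemma tw_n: "tot rw_n 3 (\<lambda>xs. wn (xs!0))"
  unfolding rw_n_def wn_def by (rule tot_cong[OF comp1[OF tot_fst tw_v1]]) auto
lemma tw_v2: "tot rw_v2 3 (\<lambda>xs. usnd (usnd (xs!0)))"
  unfolding rw_v2_def by (rule tot_cong[OF comp1[OF tot_snd tw_v1]]) auto
lemma tw_s: "tot rw_s 3 (\<lambda>xs. ws (xs!0))"
  unfolding rw_s_def ws_def by (rule tot_cong[OF comp1[OF tot_fst tw_v2]]) auto
lemma tw_v3: "tot rw_v3 3 (\<lambda>xs. usnd (usnd (usnd (xs!0))))"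
  unfolding rw_v3_def by (rule tot_cong[OF comp1[OF tot_snd tw_v2]]) auto
lemma tw_a: "tot rw_a 3 (\<lambda>xs. wa (xs!0))"
  unfolding rw_a_def wa_def by (rule tot_cong[OF comp1[OF tot_fst tw_v3]]) auto
lemma tw_b: "tot rw_b 3 (\<lambda>xs. wb (xs!0))"
  unfolding rw_b_def wb_def by (rule tot_cong[OF comp1[OF tot_snd tw_v3]]) auto

definition "rw_a2 = Comp r_add [rw_a, rw_a]"
lemma tw_a2: "tot rw_a2 3 (\<lambda>xs. wa (xs!0) + wa (xs!0))"
  unfolding rw_a2_def by (rule tot_cong[OF comp2[OF tot_add tw_a tw_a]]) auto
definition "rw_b2 = Comp r_add [rw_b, rw_b]"
lemma tw_b2: "tot rw_b2 3 (\<lambda>xs. wb (xs!0) + wb (xs!0))"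
  unfolding rw_b2_def by (rule tot_cong[OF comp2[OF tot_add tw_b tw_b]]) auto
definition "rw_up = Comp r_add [Comp r_tri [Comp r_add [rw_a2, rw_b2]], rw_a2]"
lemma tw_up: "tot rw_up 3 (\<lambda>xs. wup (xs!0))"
  unfolding rw_up_def wup_def
  by (rule tot_cong[OF comp2[OF tot_add comp1[OF tot_tri comp2[OF tot_add tw_a2 tw_b2]] tw_a2]])
     (auto simp: add.assoc)

definition "rw_R r3 = Comp r3 [rw_n, rw_n, rw_s]"
lemma tw_R: "tot r3 3 (\<lambda>xs. R (xs!0) (xs!1) (xs!2)) \<Longrightarrow>
  tot (rw_R r3) 3 (\<lambda>xs. R (wn (xs!0)) (wn (xs!0)) (ws (xs!0)))"
  unfolding rw_R_def by (rule tot_cong[OF comp3[OF _ tw_n tw_n tw_s]]) auto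

definition "rw_t3 = Comp r_sub [rw_b, Comp Succ [Comp r_mul [rw_a, Comp Succ [Comp r_add [rw_m, rw_m]]]]]"
lemma tw_t3: "tot rw_t3 3 (\<lambda>xs. Suc (wa (xs!0) * Suc (wm (xs!0) + wm (xs!0))) - wb (xs!0))"
  unfolding rw_t3_def
  by (rule tot_cong[OF comp2[OF tot_sub tw_b comp1[OF tot_succ comp2[OF tot_mul tw_a
      comp1[OF tot_succ comp2[OF tot_add tw_m tw_m]]]]]]) auto

definition Tsem :: "(nat \<Rightarrow> nat \<Rightarrow> nat \<Rightarrow> nat) \<Rightarrow> nat \<Rightarrow> nat \<Rightarrow> nat" where
  "Tsem R w c = ((cc (wm w) - c) + (c - cc (wm w))) +
     (((wup w - R (wn w) (wn w) (ws w)) + (R (wn w) (wn w) (ws w) - wup w)) +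
      (Suc (wa w * Suc (wm w + wm w)) - wb w))"

lemma Tsem0: "Tsem R w c = 0 \<longleftrightarrow> c = cc (wm w) \<and> R (wn w) (wn w) (ws w) = wup w \<and>
   wa w * Suc (wm w + wm w) < wb w"
  unfolding Tsem_def by auto

definition "r_T r3 = Comp r_add [r_neq (Proj 1) (Comp r_cc [rw_m]),
    Comp r_add [r_neq (rw_R r3) rw_up, rw_t3]]"
lemma tot_T: assumes h: "tot r3 3 (\<lambda>xs. R (xs!0) (xs!1) (xs!2))" shows
  "tot (r_T r3) 3 (\<lambda>xs. Tsem R (xs!0) (xs!1))"
  unfolding r_T_def Tsem_def
  by (rule tot_cong[OF comp2[OF tot_add tot_neq[OF p1_3 comp1[OF tot_cc tw_m]]
       comp2[OF tot_add tot_neq[OF tw_R[OF h] tw_up] tw_t3]]]) auto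

definition "r_wn = Comp r_fst [r_snd]"
lemma tot_wn: "tot r_wn 1 (\<lambda>xs. wn (xs!0))"
  unfolding r_wn_def wn_def by (rule tot_cong[OF comp1[OF tot_fst tot_snd]]) auto

lemma comp_partial: assumes t: "tot f 1 F" shows "eval (Comp f [g]) xs z \<longleftrightarrow> (\<exists>y. eval g xs y \<and> z = F [y])"
proof
  assume "eval (Comp f [g]) xs z"
  then obtain ys where "list_all2 (\<lambda>g y. eval g xs y) [g] ys" "eval f ys z" by (blast elim: evC)
  then obtain y where "ys = [y]" "eval g xs y" by (auto simp: list_all2_Cons1)
  then show "\<exists>y. eval g xs y \<and> z = F [y]" using t \<open>eval f ys z\<close> unfolding tot_def by auto
next
  assume "\<exists>y. eval g xs y \<and> z = F [y]"
  then obtain y where y: "eval g xs y" "z = F [y]" by blast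
  have "eval f [y] z" using t y(2) unfolding tot_def by simp
  then show "eval (Comp f [g]) xs z" by (rule ev_comp[rotated]) (simp add: y(1))
qed

lemma mn_least: assumes "tot T 3 TF"
  shows "eval (Mn T) [c, cy] n \<longleftrightarrow> (\<exists>w. TF [w, c, cy] = 0) \<and> n = (LEAST w. TF [w, c, cy] = 0)"
proof -
  have "eval (Mn T) [c, cy] n \<longleftrightarrow> TF [n, c, cy] = 0 \<and> (\<forall>m<n. TF [m, c, cy] \<noteq> 0)"
  proof -
    have "tot T (Suc 2) TF" using assms by simp
    from tot_mn[OF this, of "[c, cy]" n] show ?thesis by simp
  qed
  also have "\<dots> \<longleftrightarrow> (\<exists>w. TF [w, c, cy] = 0) \<and> n = (LEAST w. TF [w, c, cy] = 0)"
  proof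
    assume a: "TF [n, c, cy] = 0 \<and> (\<forall>m<n. TF [m, c, cy] \<noteq> 0)"
    show "(\<exists>w. TF [w, c, cy] = 0) \<and> n = (LEAST w. TF [w, c, cy] = 0)"
    proof -
      have "n = (LEAST w. TF [w, c, cy] = 0)"
      proof (rule Least_equality[symmetric])
        show "TF [n, c, cy] = 0" using a by blast
        fix y assume "TF [y, c, cy] = 0" then show "n \<le> y" using a by (meson not_le)
      qed
      then show ?thesis using a by blast
    qed
  next
    assume a: "(\<exists>w. TF [w, c, cy] = 0) \<and> n = (LEAST w. TF [w, c, cy] = 0)"
    then have ex: "\<exists>w. TF [w, c, cy] = 0" and ne: "n = (LEAST w. TF [w, c, cy] = 0)" by blast+
    have 1: "TF [n, c, cy] = 0" unfolding ne by (rule LeastI_ex[OF ex])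
    have 2: "\<forall>m<n. TF [m, c, cy] \<noteq> 0"
    proof (intro allI impI)
      fix m assume "m < n" then show "TF [m, c, cy] \<noteq> 0" unfolding ne by (rule not_less_Least)
    qed
    show "TF [n, c, cy] = 0 \<and> (\<forall>m<n. TF [m, c, cy] \<noteq> 0)" using 1 2 by blast
  qed
  finally show ?thesis .
qed



lemma scode_inj: "scode x = scode y \<Longrightarrow> x = y"
proof (induction x arbitrary: y rule: scode.induct)
  case 1 then show ?case by (cases y rule: scode.cases) auto
next
  case (2 xs) then show ?case by (cases y rule: scode.cases) (auto, presburger)
next
  case (3 xs) then show ?case by (cases y rule: scode.cases) (auto, presburger)
qed

lemma scode_surj: "\<exists>x. scode x = n"
proof (induction n rule: less_induct)
  case (less n)
  show ?case
  proof (cases "n = 0")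
    case True then show ?thesis by (intro exI[of _ "[]"]) simp
  next
    case False
    show ?thesis
    proof (cases "odd n")
      case True
      define k where "k = n div 2"
      have k: "n = 2 * k + 1" using True unfolding k_def by presburger
      then obtain x where "scode x = k" using less[of k] by auto
      then show ?thesis using k by (intro exI[of _ "False # x"]) simp
    next
      case ev: False
      define k where "k = n div 2 - 1"
      have k: "n = 2 * k + 2" using False ev unfolding k_def by presburger
      then obtain x where "scode x = k" using less[of k] by auto
      then show ?thesis using k by (intro exI[of _ "True # x"]) simp
    qed
  qed
qed

definition "sdec n = (SOME x. scode x = n)"
lemma scode_sdec[simp]: "scode (sdec n) = n"
  unfolding sdec_def using someI_ex[OF scode_surj] by blast
lemma sdec_scode[simp]: "sdec (scode x) = x"
  using scode_inj scode_sdec by blast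

lemma scode_rep: "scode (replicate m True @ [False]) = cc m"
  by (induction m) auto

lemma rep_pf: "replicate m True @ False # q = replicate m' True @ [False] \<Longrightarrow> q = []"
proof (induction m arbitrary: m')
  case 0 then show ?case by (cases m') auto
next
  case (Suc m) then show ?case by (cases m') auto
qed

lemma cc_code: "scode p = cc m \<Longrightarrow> p = replicate m True @ [False]"
  using scode_inj scode_rep by metis

lemma pf_cc: assumes "\<And>p y. M p y \<noteq> None \<Longrightarrow> \<exists>m. scode p = cc m"
  shows "prefix_free_machine M"
  unfolding prefix_free_machine_def
proof (intro allI impI)
  fix y p q assume "M p y \<noteq> None" "M (p @ q) y \<noteq> None"
  then obtain m m' where "scode p = cc m" "scode (p @ q) = cc m'" using assms by blast
  then have "p = replicate m True @ [False]" "p @ q = replicate m' True @ [False]"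
    using cc_code by auto
  then show "q = []" using rep_pf[of m q m'] by simp
qed



definition "Qm p y = (if \<exists>m. scode p = cc m then Some (sdec (LEAST m. scode p = cc m)) else None)"
definition "r_TQ = r_neq (Proj 1) (Comp r_cc [Proj 0])"
lemma tot_TQ: "tot r_TQ 3 (\<lambda>xs. (cc (xs!0) - xs!1) + (xs!1 - cc (xs!0)))"
  unfolding r_TQ_def by (rule tot_cong[OF tot_neq[OF p1_3 comp1[OF tot_cc p0_3]]]) simp

lemma neq0: "((a::nat) - b + (b - a) = 0) \<longleftrightarrow> b = a" by arith

lemma Q_pc: "partial_computable_machine Qm"
  unfolding partial_computable_machine_def
proof (intro exI[of _ "Mn r_TQ"] allI)
  fix p y z
  have e: "eval (Mn r_TQ) [scode p, scode y] z \<longleftrightarrow> (\<exists>w. scode p = cc w) \<and> z = (LEAST w. scode p = cc w)"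
    using mn_least[OF tot_TQ, of "scode p" "scode y" z] by (simp only: One_nat_def nth_Cons_0 nth_Cons_Suc neq0)
  show "eval (Mn r_TQ) [scode p, scode y] z = (\<exists>x. Qm p y = Some x \<and> z = scode x)"
    unfolding e Qm_def by auto
qed

lemma Q_pf: "prefix_free_machine Qm"
proof (rule pf_cc)
  fix p y assume "Qm p y \<noteq> None" then show "\<exists>m. scode p = cc m"
    unfolding Qm_def by (cases "\<exists>m. scode p = cc m") simp_all
qed

lemma Q_val: "Qm (replicate m True @ [False]) y = Some (sdec m)"
proof -
  have "(LEAST k. cc m = cc k) = m" by (rule Least_equality) (auto dest: cc_inj)
  then show ?thesis unfolding Qm_def scode_rep by auto
qed


definition "Jm p y = (if scode p = 1 then Some y else None)"
definition "r_TJ = Comp r_add [r_neq (Proj 1) r_one, r_neq (Proj 0) (Proj 2)]"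
lemma tot_TJ: "tot r_TJ 3 (\<lambda>xs. ((1 - xs!1) + (xs!1 - 1)) + ((xs!2 - xs!0) + (xs!0 - xs!2)))"
  unfolding r_TJ_def
  by (rule tot_cong[OF comp2[OF tot_add tot_neq[OF p1_3 tot_one] tot_neq[OF p0_3 p2_3]]]) simp

lemma neqJ: "((Suc 0 - c) + (c - Suc 0)) + ((cy - w) + (w - cy)) = 0 \<longleftrightarrow> c = Suc 0 \<and> w = cy" by arith

lemma J_pc: "partial_computable_machine Jm"
  unfolding partial_computable_machine_def
proof (intro exI[of _ "Mn r_TJ"] allI)
  fix p y z
  have e0: "eval (Mn r_TJ) [scode p, scode y] z \<longleftrightarrow> (\<exists>w. scode p = 1 \<and> w = scode y) \<and>
     z = (LEAST w. scode p = 1 \<and> w = scode y)"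
    using mn_least[OF tot_TJ, of "scode p" "scode y" z]
    by (simp only: One_nat_def numeral_2_eq_2 nth_Cons_0 nth_Cons_Suc neqJ)
  have e: "eval (Mn r_TJ) [scode p, scode y] z \<longleftrightarrow> scode p = 1 \<and> z = scode y"
  proof (cases "scode p = 1")
    case True
    have "(LEAST w. scode p = 1 \<and> w = scode y) = scode y" using True by (intro Least_equality) auto
    then show ?thesis unfolding e0 using True by auto
  next
    case False then show ?thesis unfolding e0 by auto
  qed
  show "eval (Mn r_TJ) [scode p, scode y] z = (\<exists>x. Jm p y = Some x \<and> z = scode x)"
    unfolding e Jm_def by auto
qed

lemma J_pf: "prefix_free_machine Jm"
proof (rule pf_cc)
  fix p y assume "Jm p y \<noteq> None" then have "scode p = cc 0" unfolding Jm_def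
    by (cases "scode p = 1") simp_all
  then show "\<exists>m. scode p = cc m" by blast
qed

lemma J_val: "Jm [False] y = Some y" by (simp add: Jm_def)

definition "Mm R p y = (if \<exists>w. Tsem R w (scode p) = 0
   then Some (sdec (wn (LEAST w. Tsem R w (scode p) = 0))) else None)"

lemma M_pc: assumes "tot r3 3 (\<lambda>xs. R (xs!0) (xs!1) (xs!2))"
  shows "partial_computable_machine (Mm R)"
  unfolding partial_computable_machine_def
proof (intro exI[of _ "Comp r_wn [Mn (r_T r3)]"] allI)
  fix p y z
  have e: "eval (Comp r_wn [Mn (r_T r3)]) [scode p, scode y] z \<longleftrightarrow>
     (\<exists>w. Tsem R w (scode p) = 0) \<and> z = wn (LEAST w. Tsem R w (scode p) = 0)"
    unfolding comp_partial[OF tot_wn] mn_least[OF tot_T[OF assms]]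
    by (simp only: One_nat_def nth_Cons_0 nth_Cons_Suc) blast
  show "eval (Comp r_wn [Mn (r_T r3)]) [scode p, scode y] z = (\<exists>x. Mm R p y = Some x \<and> z = scode x)"
    unfolding e Mm_def by auto
qed

lemma M_pf: "prefix_free_machine (Mm R)"
proof (rule pf_cc)
  fix p y assume "Mm R p y \<noteq> None"
  then obtain w where "Tsem R w (scode p) = 0" unfolding Mm_def
    by (cases "\<exists>w. Tsem R w (scode p) = 0") auto
  then show "\<exists>m. scode p = cc m" unfolding Tsem0 by blast
qed



lemma int_enc_even: "int_encode a = u + u \<Longrightarrow> 0 \<le> a \<and> nat a = u"
  unfolding int_encode_def sum_encode_def by (cases "0 \<le> a") (simp_all, presburger)

lemma int_enc_nonneg: "0 \<le> a \<Longrightarrow> int_encode a = nat a + nat a"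
  unfolding int_encode_def sum_encode_def by simp

lemma rat_lt: "(0::rat) < B \<Longrightarrow> A / B < 1 / of_nat (Suc k) \<longleftrightarrow> A * of_nat (Suc k) < B"
  by (simp add: field_simps)

lemma quot_lt: assumes "quotient_of q = (a, b)" "a * int (Suc k) < b"
  shows "q < 1 / of_nat (Suc k)"
proof -
  have b: "b > 0" using quotient_of_denom_pos[OF assms(1)] .
  have q: "q = of_int a / of_int b" using quotient_of_div[OF assms(1)] .
  have "of_int a * of_nat (Suc k) < (of_int b :: rat)"
    using assms(2) by (metis of_int_less_iff of_int_mult of_int_of_nat_eq)
  then show ?thesis unfolding q using b rat_lt[of "of_int b"] by simp
qed

lemma quot_lt2: assumes "quotient_of q = (a, b)" "q < 1 / of_nat (Suc k)" "0 \<le> q"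
  shows "a * int (Suc k) < b" "0 \<le> a"
proof -
  have b: "b > 0" using quotient_of_denom_pos[OF assms(1)] .
  have q: "q = of_int a / of_int b" using quotient_of_div[OF assms(1)] .
  have "of_int a * of_nat (Suc k) < (of_int b :: rat)"
    using assms(2) unfolding q using b rat_lt[of "of_int b"] by simp
  then show "a * int (Suc k) < b" by (metis of_int_less_iff of_int_mult of_int_of_nat_eq)
  show "0 \<le> a"
  proof (rule ccontr)
    assume "\<not> 0 \<le> a"
    then have "(of_int a :: rat) / of_int b < 0" using b by (simp add: divide_neg_pos)
    then show False using assms(3) q by simp
  qed
qed



theorem mainTheorem4:
  fixes U :: machine
  assumes "universal_pf_machine U"
  shows "\<not> in_Pi1 (NID U)"
proof
  assume "in_Pi1 (NID U)"
  then obtain f where fc: "computable_rat3 f" and fm: "\<forall>x y s. f x y (Suc s) \<le> f x y s"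
    and fl: "\<forall>x y. (\<lambda>s. real_of_rat (f x y s)) \<longlonglongrightarrow> real_of_rat (NID U x y)"
    unfolding in_Pi1_def by blast
  from fc obtain r where hr: "\<forall>x y s z. eval r [scode x, scode y, s] z \<longleftrightarrow> z = rcode (f x y s)"
    unfolding computable_rat3_def by blast
  define R where "R n1 n2 s = rcode (f (sdec n1) (sdec n2) s)" for n1 n2 s
  have tR: "tot r 3 (\<lambda>xs. R (xs!0) (xs!1) (xs!2))"
    unfolding tot_def
  proof (intro allI impI)
    fix xs :: "nat list" and z assume "length xs = 3"
    then obtain a b c where xs: "xs = [a,b,c]" by (auto simp: numeral_3_eq_3 length_Suc_conv)
    show "eval r xs z \<longleftrightarrow> z = R (xs!0) (xs!1) (xs!2)"
      using hr[rule_format, of "sdec a" "sdec b" c z] by (simp add: R_def xs)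
  qed
  have pfU: "prefix_free_machine U" and
    uni: "\<forall>M. partial_computable_machine M \<and> prefix_free_machine M \<longrightarrow> (\<exists>\<sigma>. \<forall>p y. U (\<sigma> @ p) y = M p y)"
    using assms unfolding universal_pf_machine_def by blast+
  obtain \<sigma>Q where sQ: "\<forall>p y. U (\<sigma>Q @ p) y = Qm p y" using uni Q_pc Q_pf by blast
  obtain \<sigma>J where sJ: "\<forall>p y. U (\<sigma>J @ p) y = Jm p y" using uni J_pc J_pf by blast
  obtain \<sigma>M where sM: "\<forall>p y. U (\<sigma>M @ p) y = Mm R p y" using uni M_pc[OF tR] M_pf by blast
  have progQ: "U (\<sigma>Q @ replicate (scode x) True @ [False]) y = Some x" for x y
  proof -
    have "Qm (replicate (scode x) True @ [False]) y = Some (sdec (scode x))" by (rule Q_val)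
    then show ?thesis using sQ by simp
  qed
  have progJ: "U (\<sigma>J @ [False]) x = Some x" for x using sJ J_val by simp
  have U0: "U [] y = None" for y
  proof (rule ccontr)
    assume "U [] y \<noteq> None"
    moreover have "U ([] @ (\<sigma>Q @ replicate 0 True @ [False])) y \<noteq> None" using progQ[of "sdec 0" y] by simp
    ultimately have "\<sigma>Q @ replicate 0 True @ [False] = []"
      using pfU unfolding prefix_free_machine_def by blast
    then show False by simp
  qed
  have Kc1: "\<exists>p. length p = Kc U x y \<and> U p y = Some x"
    and Kc2: "\<And>p. U p y = Some x \<Longrightarrow> Kc U x y \<le> length p"
    and Kc3: "1 \<le> Kc U x y" if ex: "\<exists>p. U p y = Some x" for x y
  proof -
    have ex': "\<exists>n p. length p = n \<and> U p y = Some x" using ex by blast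
    show 1: "\<exists>p. length p = Kc U x y \<and> U p y = Some x" unfolding Kc_def by (rule LeastI_ex[OF ex'])
    show "\<And>p. U p y = Some x \<Longrightarrow> Kc U x y \<le> length p" unfolding Kc_def by (rule Least_le) blast
    show "1 \<le> Kc U x y"
    proof (rule ccontr)
      assume "\<not> 1 \<le> Kc U x y" then have "Kc U x y = 0" by simp
      then show False using 1 U0[of y] by auto
    qed
  qed
  have exJ: "\<exists>p. U p x = Some x" for x using progJ by blast
  have exQ: "\<exists>p. U p [] = Some x" for x using progQ by blast
  have KcJ1: "1 \<le> Kc U x x" for x using Kc3[OF exJ] .
  have KcJ2: "Kc U x x \<le> Suc (length \<sigma>J)" for x using Kc2[OF exJ progJ] by simp
  have KK: "1 \<le> K U x" for x unfolding K_def using Kc3[OF exQ] .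
  have NIDxx: "NID U x x = of_nat (Kc U x x) / of_nat (K U x)" for x unfolding NID_def E_def by simp
  have NIDge: "NID U x x \<le> f x x s" for x s
  proof -
    have "decseq (\<lambda>s. real_of_rat (f x x s))" using fm by (intro decseq_SucI) (simp add: of_rat_less_eq)
    then have "real_of_rat (NID U x x) \<le> real_of_rat (f x x s)" using decseq_ge fl by blast
    then show ?thesis by (simp add: of_rat_less_eq)
  qed
  have NID0: "0 \<le> NID U x x" for x unfolding NIDxx by simp
  define m where "m = length \<sigma>M"
  define N where "N = Suc (length \<sigma>J) * Suc (m + m)"
  have fin: "finite ((\<lambda>p. the (U p [])) ` {p::bstr. length p \<le> N})"
    using finite_lists_length_le[of "UNIV::bool set" N] by simp
  obtain x where xnot: "x \<notin> (\<lambda>p. the (U p [])) ` {p. length p \<le> N}"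
    using ex_new_if_finite[OF infinite_UNIV_listI fin] by blast
  have KxN: "N < K U x"
  proof (rule ccontr)
    assume a: "\<not> N < K U x"
    obtain p where "length p = K U x" "U p [] = Some x" using Kc1[OF exQ] unfolding K_def by blast
    then have "x \<in> (\<lambda>p. the (U p [])) ` {p. length p \<le> N}" using a
      by (intro image_eqI[where x = p]) auto
    then show False using xnot by blast
  qed
  have "Kc U x x * Suc (m + m) \<le> N" unfolding N_def using mult_le_mono1[OF KcJ2[of x]] .
  then have "Kc U x x * Suc (m + m) < K U x" using KxN by linarith
  then have "of_nat (Kc U x x) * of_nat (Suc (m + m)) < (of_nat (K U x) :: rat)"
    by (metis of_nat_less_iff of_nat_mult)
  moreover have posx: "(0::rat) < of_nat (K U x)" using KK[of x] by simp
  ultimately have NIDx: "NID U x x < 1 / of_nat (Suc (m + m))"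
    unfolding NIDxx rat_lt[OF posx] by blast
  have "\<forall>\<^sub>F s in sequentially. real_of_rat (f x x s) < real_of_rat (1 / of_nat (Suc (m + m)))"
    using order_tendstoD(2)[OF fl[rule_format, of x x], of "real_of_rat (1 / of_nat (Suc (m + m)))"] NIDx
    unfolding of_rat_less by blast
  then obtain s where fs: "f x x s < 1 / of_nat (Suc (m + m))"
    unfolding eventually_sequentially of_rat_less by blast
  obtain a b where qab: "quotient_of (f x x s) = (a, b)" by (cases "quotient_of (f x x s)")
  have f0: "0 \<le> f x x s" using NID0[of x] NIDge[of x s] by linarith
  have ab: "a * int (Suc (m + m)) < b" "0 \<le> a" using quot_lt2[OF qab fs f0] by auto
  have b0: "0 < b" using quotient_of_denom_pos[OF qab] .
  define w where "w = prod_encode (m, prod_encode (scode x, prod_encode (s, prod_encode (nat a, nat b))))"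
  have wv: "wm w = m" "wn w = scode x" "ws w = s" "wa w = nat a" "wb w = nat b"
    unfolding w_def wm_def wn_def ws_def wa_def wb_def unpair_encode by simp_all
  have "Tsem R w (cc m) = 0"
    unfolding Tsem0
  proof (intro conjI)
    show "cc m = cc (wm w)" unfolding wv by simp
    have "R (wn w) (wn w) (ws w) = rcode (f x x s)"
      unfolding wv R_def by simp
    also have "\<dots> = prod_encode (nat a + nat a, nat b + nat b)"
      unfolding rcode_def qab using int_enc_nonneg[OF ab(2)] int_enc_nonneg[of b] b0 by simp
    also have "\<dots> = wup w"
      unfolding wup_def wv prod_encode_def by (simp add: add.assoc)
    finally show "R (wn w) (wn w) (ws w) = wup w" .
    have "int (nat a * Suc (m + m)) < int (nat b)" using ab b0 by (simp add: algebra_simps)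
    then show "wa w * Suc (wm w + wm w) < wb w"
      unfolding wv by linarith
  qed
  define p where "p = replicate m True @ [False]"
  have exw: "\<exists>w. Tsem R w (scode p) = 0" unfolding p_def scode_rep using \<open>Tsem R w (cc m) = 0\<close> by blast
  define w0 where "w0 = (LEAST w. Tsem R w (scode p) = 0)"
  have T0: "Tsem R w0 (cc m) = 0" using LeastI_ex[OF exw] unfolding w0_def p_def scode_rep .
  define x0 where "x0 = sdec (wn w0)"
  have "Mm R p [] = Some x0" unfolding Mm_def x0_def w0_def using exw by simp
  then have prog0: "U (\<sigma>M @ p) [] = Some x0" using sM by simp
  have Kx0: "K U x0 \<le> Suc (m + m)"
  proof -
    have "Kc U x0 [] \<le> length (\<sigma>M @ p)" using Kc2[of "[]" x0 "\<sigma>M @ p"] prog0 by blast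
    then show ?thesis unfolding K_def by (simp add: m_def p_def)
  qed
  have Kx01: "1 \<le> K U x0" using KK .
  from T0 have t1: "cc m = cc (wm w0)" and t2: "R (wn w0) (wn w0) (ws w0) = wup w0"
    and t3: "wa w0 * Suc (wm w0 + wm w0) < wb w0" unfolding Tsem0 by auto
  have wm0: "wm w0 = m" using cc_inj t1 by simp
  obtain a1 b1 where q1: "quotient_of (f x0 x0 (ws w0)) = (a1, b1)"
    by (cases "quotient_of (f x0 x0 (ws w0))")
  have b10: "0 < b1" using quotient_of_denom_pos[OF q1] .
  have "prod_encode (int_encode a1, int_encode b1) = prod_encode (wa w0 + wa w0, wb w0 + wb w0)"
    using t2 unfolding R_def x0_def[symmetric] rcode_def q1 wup_def prod_encode_def
    by (simp add: add.assoc)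
  then have ia: "int_encode a1 = wa w0 + wa w0" and ib: "int_encode b1 = wb w0 + wb w0" by auto
  have a1: "0 \<le> a1" "nat a1 = wa w0" using int_enc_even[OF ia] by auto
  have b1: "nat b1 = wb w0" using int_enc_even[OF ib] by auto
  have "a1 * int (Suc (m + m)) < b1"
    using t3 a1 b1 b10 unfolding wm0
    by (metis int_nat_eq nat_less_eq_zless nat_mult_distrib of_nat_0_le_iff nat_int mult_nonneg_nonneg)
  then have "f x0 x0 (ws w0) < 1 / of_nat (Suc (m + m))" by (rule quot_lt[OF q1])
  then have "NID U x0 x0 < 1 / of_nat (Suc (m + m))" using NIDge[of x0 "ws w0"] by linarith
  moreover have posx0: "(0::rat) < of_nat (K U x0)" using Kx01 by simp
  ultimately have "of_nat (Kc U x0 x0) * of_nat (Suc (m + m)) < (of_nat (K U x0) :: rat)"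
    unfolding NIDxx rat_lt[OF posx0] by blast
  then have "Kc U x0 x0 * Suc (m + m) < K U x0" by (metis of_nat_less_iff of_nat_mult)
  moreover have "Suc (m + m) \<le> Kc U x0 x0 * Suc (m + m)"
    using mult_le_mono1[OF KcJ1[of x0], of "Suc (m + m)"] by (simp only: mult_1)
  ultimately show False using Kx0 by linarith
qed


end
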